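(* Let $\Sigma$ be a finite totally ordered alphabet, let $W = a_1 a_2 \cdots a_n \in \Sigma^+$, and let $W = L_1 L_2 \cdots L_k$ be its Lyndon factorization. Let $1 \le r \le s \le k$ and let $u = L_r L_{r+1} \cdots L_s$, occupying positions $first(u), \dots, last(u)$ of $W$. Then the sorting of the suffixes of $u$ is compatible with the sorting of the suffixes of $W$; that is, for all indices $i, j$ with $first(u) \le i < j \le last(u)$, $$W[i, last(u)] < W[j, last(u)] \iff W[i,n] < W[j,n],$$ where $<$ denotes the (strict) lexicographic order on $\Sigma^*$.
   Context: For a word $W = a_1\cdots a_n$, $W[i,j] = a_i\cdots a_j$. The lexicographic order on $\Sigma^*$ is the usual one induced by the order of $\Sigma$, in which a proper prefix is smaller than the longer word. Two words $x,y$ are conjugate if $x = pq$, $y = qp$ for some words $p,q$. A Lyndon word is a nonempty primitive word that is strictly smaller (lexicographically) than all its other conjugates. The Lyndon factorization of $W \in \Sigma^+$ is the unique factorization $W = L_1 L_2\cdots L_k$ into Lyndon words with $L_1 \ge L_2 \ge \cdots \ge L_k$ lexicographically. For a factor $u$ of $W$ occurring at a fixed set of positions, $first(u)$ and $last(u)$ denote the positions in $W$ of its first and last letter; $W[i, last(u)]$ is the local suffix of $u$ at position $i$ and $W[i,n]$ is the global suffix of $W$ at position $i$. *)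

theory Defs
  imports Main
begin

text \<open>Words are lists; positions are 1-based as in the paper.\<close>

definition lex_less :: "'a::linorder list \<Rightarrow> 'a list \<Rightarrow> bool" where
  "lex_less x y \<longleftrightarrow>
     (\<exists>p. p \<noteq> [] \<and> y = x @ p) \<or>
     (\<exists>p a b s t. a < b \<and> x = p @ a # s \<and> y = p @ b # t)"

definition conjugate :: "'a list \<Rightarrow> 'a list \<Rightarrow> bool" where
  "conjugate x y \<longleftrightarrow> (\<exists>p q. x = p @ q \<and> y = q @ p)"

definition primitive :: "'a list \<Rightarrow> bool" where
  "primitive w \<longleftrightarrow> w \<noteq> [] \<and> \<not> (\<exists>v k. k \<ge> 2 \<and> w = concat (replicate k v))"

definition lyndon :: "'a::linorder list \<Rightarrow> bool" where
  "lyndon w \<longleftrightarrow> w \<noteq> [] \<and> primitive w \<and>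
     (\<forall>y. conjugate w y \<and> y \<noteq> w \<longrightarrow> lex_less w y)"

definition lyndon_factorization :: "'a::linorder list \<Rightarrow> 'a list list \<Rightarrow> bool" where
  "lyndon_factorization W Ls \<longleftrightarrow> concat Ls = W \<and> (\<forall>L\<in>set Ls. lyndon L) \<and>
     sorted_wrt (\<lambda>x y. y = x \<or> lex_less y x) Ls"

text \<open>W[i,j] = a_i ... a_j (1-based, inclusive).\<close>
definition factor :: "'a list \<Rightarrow> nat \<Rightarrow> nat \<Rightarrow> 'a list" where
  "factor W i j = take (Suc j - i) (drop (i - 1) W)"

end

theory Submission
  imports Defs
begin

abbreviation lexl :: "'a::ord list \<Rightarrow> 'a list \<Rightarrow> bool" where "lexl \<equiv> ord_class.lexordp"

lemma lex_less_iff: "lex_less x y \<longleftrightarrow> lexl x y"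
  unfolding lex_less_def lexordp_iff by (auto simp: neq_Nil_conv)

definition le_inf :: "'a::linorder list \<Rightarrow> (nat \<Rightarrow> 'a) \<Rightarrow> bool" where
  "le_inf Y f \<longleftrightarrow> (\<forall>i<length Y. Y!i = f i) \<or> (\<exists>q<length Y. (\<forall>i<q. Y!i = f i) \<and> Y!q < f q)"

lemma lexordp_idx_mism:
  fixes Y Z :: "'a::linorder list"
  assumes "q < length Y" "q < length Z" "\<forall>i<q. Y!i = Z!i" "Y!q < Z!q"
  shows "lexl Y Z"
proof -
  have t: "take q Y = take q Z" by (rule nth_equalityI) (use assms in auto)
  have "Y = take q Y @ Y!q # drop (Suc q) Y" using assms(1) by (simp add: id_take_nth_drop)
  moreover have "Z = take q Y @ Z!q # drop (Suc q) Z" using assms(2) t by (metis id_take_nth_drop)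
  ultimately show ?thesis using assms(4) by (metis lexordp_append_left_rightI)
qed

lemma lexordp_idx_pref:
  fixes Y Z :: "'a::linorder list"
  assumes "length Y < length Z" "\<forall>i<length Y. Y!i = Z!i"
  shows "lexl Y Z"
proof -
  have "take (length Y) Z = Y" by (rule nth_equalityI) (use assms in auto)
  then have "Z = Y @ drop (length Y) Z" by (metis append_take_drop_id)
  moreover have "drop (length Y) Z \<noteq> []" using assms(1) by simp
  ultimately show ?thesis by (metis lexordp_append_rightI)
qed

lemma le_inf_less:
  fixes Y Z :: "'a::linorder list"
  assumes "le_inf Y f" "p < length Z" "\<forall>i<p. f i = Z!i" "f p < Z!p"
  shows "lexl Y Z"
  using assms(1) unfolding le_inf_def
proof
  assume A: "\<forall>i<length Y. Y!i = f i"
  show ?thesis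
  proof (cases "length Y \<le> p")
    case True then show ?thesis using A assms by (intro lexordp_idx_pref) auto
  next
    case False then show ?thesis using A assms by (intro lexordp_idx_mism[of p]) auto
  qed
next
  assume "\<exists>q<length Y. (\<forall>i<q. Y!i = f i) \<and> Y!q < f q"
  then obtain q where q: "q<length Y" "\<forall>i<q. Y!i = f i" "Y!q < f q" by blast
  show ?thesis
  proof (cases "q < p")
    case True then show ?thesis using q assms by (intro lexordp_idx_mism[of q]) auto
  next
    case False
    have "Y!p < Z!p"
    proof (cases "p = q")
      case True then show ?thesis using q assms by auto
    next
      case False then show ?thesis using q assms \<open>\<not> q < p\<close> by auto
    qed
    then show ?thesis using q assms False by (intro lexordp_idx_mism[of p]) auto
  qed
qed

lemma le_inf_trans:
  fixes Y :: "'a::linorder list"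
  assumes "le_inf Y f" "\<forall>i<p. f i = g i" "f p < g p"
  shows "le_inf Y g"
proof -
  have "(\<forall>i<length Y. Y!i = f i) \<or> (\<exists>q<length Y. (\<forall>i<q. Y!i = f i) \<and> Y!q < f q)"
    using assms(1) by (simp add: le_inf_def)
  then show ?thesis
  proof
  assume A: "\<forall>i<length Y. Y!i = f i"
  show ?thesis
  proof (cases "length Y \<le> p")
    case True then show ?thesis using A assms by (auto simp: le_inf_def)
  next
    case False then show ?thesis using A assms by (auto simp: le_inf_def intro!: exI[of _ p])
  qed
next
  assume "\<exists>q<length Y. (\<forall>i<q. Y!i = f i) \<and> Y!q < f q"
  then obtain q where q: "q<length Y" "\<forall>i<q. Y!i = f i" "Y!q < f q" by blast
  show ?thesis
  proof (cases "q < p")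
    case True then show ?thesis using q assms unfolding le_inf_def by (intro disjI2 exI[of _ q]) auto
  next
    case False
    have "Y!p < g p"
    proof (cases "p = q")
      case True then show ?thesis using q assms by auto
    next
      case False then show ?thesis using q assms \<open>\<not> q < p\<close> by auto
    qed
    then show ?thesis using q assms False unfolding le_inf_def by (intro disjI2 exI[of _ p]) auto
  qed
qed
qed

lemma le_inf_append:
  fixes P R :: "'a::linorder list"
  assumes "\<forall>i<length P. P!i = g i" "le_inf R (\<lambda>i. g (i + length P))"
  shows "le_inf (P @ R) g"
proof -
  have "(\<forall>i<length R. R ! i = g (i + length P)) \<or> (\<exists>q<length R. (\<forall>i<q. R ! i = g (i + length P)) \<and> R ! q < g (q + length P))"
    using assms(2) by (simp add: le_inf_def)
  then show ?thesis
  proof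
  assume A: "\<forall>i<length R. R ! i = g (i + length P)"
  show ?thesis unfolding le_inf_def
  proof (intro disjI1 allI impI)
    fix i assume "i < length (P @ R)"
    then show "(P @ R) ! i = g i" using A assms(1)
      by (cases "i < length P") (auto simp: nth_append)
  qed
next
  assume "\<exists>q<length R. (\<forall>i<q. R ! i = g (i + length P)) \<and> R ! q < g (q + length P)"
  then obtain q where q: "q<length R" "\<forall>i<q. R ! i = g (i + length P)" "R ! q < g (q + length P)"
    by blast
  show ?thesis unfolding le_inf_def
  proof (intro disjI2 exI[of _ "q + length P"] conjI allI impI)
    fix i assume "i < q + length P"
    then show "(P @ R) ! i = g i" using q assms(1)
      by (cases "i < length P") (auto simp: nth_append)
  qed (use q in \<open>auto simp: nth_append\<close>)
qed
qed

lemma lexordp_same_len: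
  fixes a b :: "'a::linorder list"
  assumes "length a = length b" "lexl a b"
  shows "lexl (a @ x) (b @ y)"
proof -
  have "(\<exists>c vs. b = a @ c # vs) \<or> (\<exists>us c d vs ws. c < d \<and> a = us @ c # vs \<and> b = us @ d # ws)"
    using assms(2) by (simp add: lexordp_iff)
  moreover have "\<not> (\<exists>c vs. b = a @ c # vs)"
  proof
    assume "\<exists>c vs. b = a @ c # vs"
    then obtain c vs where "b = a @ c # vs" by blast
    then have "length b = length a + Suc (length vs)" by simp
    then show False using assms(1) by simp
  qed
  ultimately obtain us c d vs ws where mm: "c < d" "a = us @ c # vs" "b = us @ d # ws" by blast
  have "a @ x = us @ c # (vs @ x)" "b @ y = us @ d # (ws @ y)" using mm by simp_all
  then show ?thesis using mm(1) by (metis lexordp_append_left_rightI)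
qed

lemma prim_noncomm:
  assumes prim: "primitive L" and "x \<noteq> []" "y \<noteq> []" "L = x @ y"
  shows "y @ x \<noteq> L"
proof
  assume "y @ x = L"
  then have "x @ y = y @ x" using assms(4) by simp
  then obtain n zs where n: "n > 1" "concat (replicate n zs) = x @ y"
    using comm_append_is_replicate[OF assms(2,3)] by blast
  have "2 \<le> n" using n(1) by simp
  moreover have "L = concat (replicate n zs)" using n(2) assms(4) by simp
  ultimately show False using prim unfolding primitive_def by blast
qed

lemma lyndon_suffix:
  fixes L :: "'a::linorder list"
  assumes ly: "lyndon L" and L: "L = M @ w" and M: "M \<noteq> []" and w: "w \<noteq> []"
  shows "\<exists>p<length w. (\<forall>i<p. w!i = L!i) \<and> L!p < w!p"
proof -
  have prim: "primitive L" using ly by (simp add: lyndon_def)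
  have noncomm: "\<And>x y. x \<noteq> [] \<Longrightarrow> y \<noteq> [] \<Longrightarrow> L = x @ y \<Longrightarrow> y @ x \<noteq> L"
    using prim_noncomm[OF prim] by blast
  have conj: "\<And>y. conjugate L y \<Longrightarrow> y \<noteq> L \<Longrightarrow> lexl L y"
    using ly by (simp add: lyndon_def lex_less_iff)
  have "conjugate L (w @ M)" unfolding conjugate_def using L by blast
  then have "lexl L (w @ M)"
    using conj[of "w @ M"] noncomm[OF M w L] by blast
  then have "(\<exists>x vs. w @ M = L @ x # vs) \<or> (\<exists>us a b vs ws. a < b \<and> L = us @ a # vs \<and> w @ M = us @ b # ws)"
    by (simp add: lexordp_iff)
  moreover have "\<not> (\<exists>x vs. w @ M = L @ x # vs)"
  proof
    assume "\<exists>x vs. w @ M = L @ x # vs"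
    then obtain x vs where "w @ M = L @ x # vs" by blast
    then have "length (w @ M) = length (L @ x # vs)" by simp
    then show False using L by simp
  qed
  ultimately obtain us a b vs ws where mm: "a < b" "L = us @ a # vs" "w @ M = us @ b # ws" by blast
  show ?thesis
  proof (cases "length us < length w")
    case True
    show ?thesis
    proof (intro exI[of _ "length us"] conjI allI impI)
      show "length us < length w" by fact
      fix i assume "i < length us"
      have "w ! i = (w @ M) ! i" using True \<open>i < length us\<close> by (simp add: nth_append)
      moreover have "L ! i = us ! i" using mm(2) \<open>i < length us\<close> by (simp add: nth_append)
      moreover have "(w @ M) ! i = us ! i" using mm(3) \<open>i < length us\<close> by (simp add: nth_append)
      ultimately show "w ! i = L ! i" by simp
    next
      have "w ! length us = (w @ M) ! length us" using True by (simp add: nth_append)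
      then have "w ! length us = b" using mm(3) by simp
      moreover have "L ! length us = a" using mm(2) by simp
      ultimately show "L ! length us < w ! length us" using mm(1) by simp
    qed
  next
    case False
    have t1: "take (length w) (us @ b # ws) = take (length w) us" using False by simp
    have t2: "take (length w) (us @ a # vs) = take (length w) us" using False by simp
    have "take (length w) (w @ M) = take (length w) L" using t1 t2 mm(2,3) by simp
    then have wpre: "take (length w) L = w" by simp
    define v where "v = drop (length w) L"
    have Lv: "L = w @ v" using wpre v_def by (metis append_take_drop_id)
    have wv: "w @ v = M @ w" using Lv L by simp
    have lv: "length v = length M" using arg_cong[OF wv, of length] by simp
    have v: "v \<noteq> []" using lv M by auto
    have "lexl (w @ v) (w @ M)" using \<open>lexl L (w @ M)\<close> Lv by simp
    then have "lexl v M" by (rule lexordp_append_leftD) simp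
    moreover note lv
    ultimately have "lexl (v @ w) (M @ w)" using lexordp_same_len by blast
    moreover have "conjugate L (v @ w)" unfolding conjugate_def using Lv by blast
    moreover have "lexl L (v @ w)"
      using conj[of "v @ w"] noncomm[OF w v Lv] calculation(2) by blast
    ultimately show ?thesis using L lexordp_antisym by blast
  qed
qed

abbreviation Lw :: "'a list \<Rightarrow> nat \<Rightarrow> 'a" where
  "Lw L \<equiv> (\<lambda>i. L ! (i mod length L))"

lemma le_inf_concat:
  fixes L :: "'a::linorder list"
  assumes ly: "lyndon L" and Rs: "\<forall>M\<in>set Rs. M = L \<or> lexl M L"
  shows "le_inf (concat Rs) (Lw L)"
  using Rs
proof (induction Rs)
  case Nil then show ?case by (simp add: le_inf_def)
next
  case (Cons M Rs)
  have IH: "le_inf (concat Rs) (Lw L)" using Cons by simp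
  have Lne: "L \<noteq> []" using ly by (simp add: lyndon_def)
  have "M = L \<or> lexl M L" using Cons.prems by simp
  then show ?case
  proof
    assume "M = L"
    have C: "le_inf (concat Rs) (\<lambda>i. Lw L (i + length L))" using IH by simp
    have B: "\<forall>i<length L. L!i = Lw L i" by simp
    have "le_inf (L @ concat Rs) (Lw L)" using le_inf_append[OF B C] .
    then show ?thesis using \<open>M = L\<close> by simp
  next
    assume "lexl M L"
    then have "(\<exists>x vs. L = M @ x # vs) \<or> (\<exists>us a b vs ws. a < b \<and> M = us @ a # vs \<and> L = us @ b # ws)"
      by (simp add: lexordp_iff)
    then show ?thesis
    proof
      assume "\<exists>x vs. L = M @ x # vs"
      then obtain c vs where Lc: "L = M @ c # vs" by blast
      show ?thesis
      proof (cases "M = []")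
        case True then show ?thesis using IH by simp
      next
        case False
        define w where "w = c # vs"
        have Lw': "L = M @ w" using Lc w_def by simp
        obtain p where p: "p < length w" "\<forall>i<p. w!i = L!i" "L!p < w!p"
          using lyndon_suffix[OF ly Lw' False] w_def by auto
        have "le_inf (concat Rs) (\<lambda>i. L ! ((i + length M) mod length L))"
        proof (rule le_inf_trans[OF IH, of p])
          show "\<forall>i<p. Lw L i = L ! ((i + length M) mod length L)"
          proof (intro allI impI)
            fix i assume "i < p"
            then have b1: "i + length M < length L" "i < length L" using p(1) Lw' by auto
            have e2: "L ! (i + length M) = w ! i" using Lw' by (simp add: nth_append)
            show "Lw L i = L ! ((i + length M) mod length L)"
              using p(2) \<open>i < p\<close> b1 e2 by simp
          qed
          have b1: "p + length M < length L" "p < length L" using p(1) Lw' by auto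
          have e2: "L ! (p + length M) = w ! p" using Lw' by (simp add: nth_append)
          show "Lw L p < L ! ((p + length M) mod length L)"
            using p(3) b1 e2 by simp
        qed
        then have C: "le_inf (concat Rs) (\<lambda>i. Lw L (i + length M))" by simp
        have B: "\<forall>i<length M. M!i = Lw L i"
        proof (intro allI impI)
          fix i assume "i < length M"
          then have "i < length L" using Lw' by simp
          then show "M!i = Lw L i" using Lw' \<open>i < length M\<close> by (simp add: nth_append)
        qed
        have "le_inf (M @ concat Rs) (Lw L)" using le_inf_append[OF B C] .
        then show ?thesis by simp
      qed
    next
      assume "\<exists>us a b vs ws. a < b \<and> M = us @ a # vs \<and> L = us @ b # ws"
      then obtain us a b vs ws where mm: "a < b" "M = us @ a # vs" "L = us @ b # ws" by blast
      show ?thesis unfolding le_inf_def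
      proof (intro disjI2 exI[of _ "length us"] conjI allI impI)
        show "length us < length (concat (M # Rs))" using mm by simp
        fix i assume "i < length us"
        then show "concat (M # Rs) ! i = Lw L i" using mm by (simp add: nth_append)
      next
        show "concat (M # Rs) ! length us < Lw L (length us)" using mm by (simp add: nth_append)
      qed
    qed
  qed
qed


lemma concat_lt:
  fixes L :: "'a::linorder list"
  assumes ly: "lyndon L" and Rs: "\<forall>M\<in>set Rs. M \<noteq> [] \<and> (M = L \<or> lexl M L)"
  shows "lexl (concat Rs) (L @ concat Rs)"
  using Rs
proof (induction Rs)
  case Nil
  have "L \<noteq> []" using ly by (simp add: lyndon_def)
  then show ?case by simp
next
  case (Cons M Rs)
  have IH: "lexl (concat Rs) (L @ concat Rs)" using Cons by simp
  have Rsle: "\<forall>M\<in>set Rs. M = L \<or> lexl M L" using Cons.prems by simp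
  have Mne: "M \<noteq> []" using Cons.prems by simp
  have "M = L \<or> lexl M L" using Cons.prems by simp
  then show ?case
  proof
    assume "M = L"
    have "lexl (L @ concat Rs) (L @ L @ concat Rs)" using lexordp_append_leftI[OF IH] .
    then show ?thesis using \<open>M = L\<close> by (simp only: concat.simps append_assoc)
  next
    assume "lexl M L"
    then have "(\<exists>x vs. L = M @ x # vs) \<or> (\<exists>us a b vs ws. a < b \<and> M = us @ a # vs \<and> L = us @ b # ws)"
      by (simp add: lexordp_iff)
    then show ?thesis
    proof
      assume "\<exists>x vs. L = M @ x # vs"
      then obtain c vs where Lc: "L = M @ c # vs" by blast
      define w where "w = c # vs"
      have Lw': "L = M @ w" using Lc w_def by simp
      obtain p where p: "p < length w" "\<forall>i<p. w!i = L!i" "L!p < w!p"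
        using lyndon_suffix[OF ly Lw' Mne] w_def by auto
      have "lexl (concat Rs) (w @ M @ concat Rs)"
      proof (rule le_inf_less[OF le_inf_concat[OF ly Rsle], of p])
        show "p < length (w @ M @ concat Rs)" using p by simp
        show "\<forall>i<p. Lw L i = (w @ M @ concat Rs) ! i"
        proof (intro allI impI)
          fix i assume "i < p"
          then have "i < length L" "i < length w" using p Lw' by auto
          then show "Lw L i = (w @ M @ concat Rs) ! i" using p(2) \<open>i < p\<close> by (simp add: nth_append)
        qed
        have "p < length L" using p Lw' by auto
        then show "Lw L p < (w @ M @ concat Rs) ! p" using p by (simp add: nth_append)
      qed
      then have "lexl (M @ concat Rs) (M @ w @ M @ concat Rs)" by (rule lexordp_append_leftI)
      then show ?thesis using Lw' by (simp only: concat.simps append_assoc)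
    next
      assume "\<exists>us a b vs ws. a < b \<and> M = us @ a # vs \<and> L = us @ b # ws"
      then obtain us a b vs ws where mm: "a < b" "M = us @ a # vs" "L = us @ b # ws" by blast
      have "lexl (us @ a # (vs @ concat Rs)) (us @ b # (ws @ M @ concat Rs))"
        using mm(1) by (rule lexordp_append_left_rightI)
      then show ?thesis using mm by (simp only: concat.simps append_assoc append_Cons)
    qed
  qed
qed

lemma key:
  fixes Ls :: "'a::linorder list list"
  assumes lyn: "\<forall>L\<in>set Ls. lyndon L" and srt: "sorted_wrt (\<lambda>x y. y = x \<or> lex_less y x) Ls"
  shows "s \<le> length Ls \<Longrightarrow> d < length (concat (take s Ls)) \<Longrightarrow>
     lexl (concat (drop s Ls)) (drop d (concat (take s Ls)) @ concat (drop s Ls))"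
proof (induction s arbitrary: d)
  case 0 then show ?case by simp
next
  case (Suc s)
  have sl: "s < length Ls" using Suc.prems by simp
  define L where "L = Ls ! s"
  define U where "U = concat (take s Ls)"
  define Q where "Q = concat (drop (Suc s) Ls)"
  have tk: "concat (take (Suc s) Ls) = U @ L" by (simp add: U_def L_def take_Suc_conv_app_nth[OF sl])
  have dr: "concat (drop s Ls) = L @ Q" by (simp add: Q_def L_def Cons_nth_drop_Suc[OF sl, symmetric])
  have lyL: "lyndon L" using lyn sl L_def by simp
  have RsP: "\<forall>M\<in>set (drop (Suc s) Ls). M \<noteq> [] \<and> (M = L \<or> lexl M L)"
  proof
    fix M assume Min: "M \<in> set (drop (Suc s) Ls)"
    then obtain j where j: "j < length (drop (Suc s) Ls)" "M = drop (Suc s) Ls ! j"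
      by (metis in_set_conv_nth)
    then have Mj: "M = Ls ! (Suc s + j)" "Suc s + j < length Ls" by auto
    have allij: "\<forall>i j. i < j \<longrightarrow> j < length Ls \<longrightarrow> (Ls ! j = Ls ! i \<or> lex_less (Ls ! j) (Ls ! i))"
      using srt unfolding sorted_wrt_iff_nth_less by blast
    have "Ls ! (Suc s + j) = Ls ! s \<or> lex_less (Ls ! (Suc s + j)) (Ls ! s)"
      using allij[rule_format, of s "Suc s + j"] Mj(2) by simp
    then have "M = L \<or> lex_less M L" using Mj(1) L_def by simp
    moreover have "lyndon M" using lyn Min by (meson in_set_dropD)
    ultimately show "M \<noteq> [] \<and> (M = L \<or> lexl M L)" by (auto simp: lyndon_def lex_less_iff)
  qed
  have Rsle: "\<forall>M\<in>set (drop (Suc s) Ls). M = L \<or> lexl M L" using RsP by blast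
  have F: "lexl Q (L @ Q)" using concat_lt[OF lyL RsP] Q_def by simp
  show ?case unfolding tk Q_def[symmetric]
  proof (cases "d < length U")
    case True
    have IH: "lexl (L @ Q) (drop d U @ L @ Q)" using Suc.IH[of d] sl True U_def dr by simp
    have "drop d (U @ L) = drop d U @ L" using True by simp
    then show "lexl Q (drop d (U @ L) @ Q)" using lexordp_trans[OF F IH] by simp
  next
    case False
    define d' where "d' = d - length U"
    have dd: "drop d (U @ L) = drop d' L" using False d'_def by simp
    have d'L: "d' < length L" using Suc.prems(2) tk False d'_def by simp
    show "lexl Q (drop d (U @ L) @ Q)"
    proof (cases "d' = 0")
      case True then show ?thesis using F dd by simp
    next
      case False
      define z where "z = drop d' L"
      have Lz: "L = take d' L @ z" using z_def by simp
      have tne: "take d' L \<noteq> []" using False d'L by (cases L) auto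
      have zne: "z \<noteq> []" using z_def d'L by simp
      obtain p where p: "p < length z" "\<forall>i<p. z!i = L!i" "L!p < z!p"
        using lyndon_suffix[OF lyL Lz tne zne] by auto
      have "lexl Q (z @ Q)" unfolding Q_def
      proof (rule le_inf_less[OF le_inf_concat[OF lyL Rsle], of p])
        show "p < length (z @ concat (drop (Suc s) Ls))" using p by simp
        show "\<forall>i<p. Lw L i = (z @ concat (drop (Suc s) Ls)) ! i"
        proof (intro allI impI)
          fix i assume "i < p"
          then have "i < length L" "i < length z" using p z_def by auto
          then show "Lw L i = (z @ concat (drop (Suc s) Ls)) ! i"
            using p(2) \<open>i < p\<close> by (simp add: nth_append)
        qed
        have "p < length L" using p z_def by auto
        then show "Lw L p < (z @ concat (drop (Suc s) Ls)) ! p" using p by (simp add: nth_append)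
      qed
      then show ?thesis using dd z_def by simp
    qed
  qed
qed

lemma compat:
  fixes x y Q :: "'a::linorder list"
  assumes len: "length y < length x"
    and K: "\<And>c vs. x = y @ c # vs \<Longrightarrow> lexl Q (c # vs @ Q)"
  shows "lexl x y \<longleftrightarrow> lexl (x @ Q) (y @ Q)"
proof
  assume "lexl x y"
  then have "(\<exists>c vs. y = x @ c # vs) \<or> (\<exists>us a b vs ws. a < b \<and> x = us @ a # vs \<and> y = us @ b # ws)"
    by (simp add: lexordp_iff)
  moreover have "\<not> (\<exists>c vs. y = x @ c # vs)"
  proof
    assume "\<exists>c vs. y = x @ c # vs"
    then obtain c vs where "y = x @ c # vs" by blast
    then have "length y = length x + Suc (length vs)" by simp
    then show False using len by simp
  qed
  ultimately obtain us a b vs ws where mm: "a < b" "x = us @ a # vs" "y = us @ b # ws" by blast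
  have "lexl (us @ a # (vs @ Q)) (us @ b # (ws @ Q))" using mm(1) by (rule lexordp_append_left_rightI)
  then show "lexl (x @ Q) (y @ Q)" using mm by simp
next
  assume A: "lexl (x @ Q) (y @ Q)"
  show "lexl x y"
  proof (rule ccontr)
    assume N: "\<not> lexl x y"
    have "x \<noteq> y" using len by auto
    then have "lexl y x" using N lexordp_linear by blast
    then have "(\<exists>c vs. x = y @ c # vs) \<or> (\<exists>us a b vs ws. a < b \<and> y = us @ a # vs \<and> x = us @ b # ws)"
      by (simp add: lexordp_iff)
    then have "lexl (y @ Q) (x @ Q)"
    proof
      assume "\<exists>c vs. x = y @ c # vs"
      then obtain c vs where xc: "x = y @ c # vs" by blast
      have "lexl (y @ Q) (y @ (c # vs @ Q))" using K[OF xc] by (rule lexordp_append_leftI)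
      then show ?thesis using xc by simp
    next
      assume "\<exists>us a b vs ws. a < b \<and> y = us @ a # vs \<and> x = us @ b # ws"
      then obtain us a b vs ws where mm: "a < b" "y = us @ a # vs" "x = us @ b # ws" by blast
      have "lexl (us @ a # (vs @ Q)) (us @ b # (ws @ Q))" using mm(1) by (rule lexordp_append_left_rightI)
      then show ?thesis using mm by (simp only: concat.simps append_assoc append_Cons)
    qed
    then show False using A lexordp_antisym by blast
  qed
qed


theorem theorem2:
  fixes W :: "'a::{finite,linorder} list" and Ls :: "'a list list" and r s :: nat
  assumes "W \<noteq> []"
    and "lyndon_factorization W Ls"
    and "1 \<le> r" and "r \<le> s" and "s \<le> length Ls"
  shows "let n = length W;
             first_u = length (concat (take (r - 1) Ls)) + 1;
             last_u = length (concat (take s Ls))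
         in \<forall>i j. first_u \<le> i \<and> i < j \<and> j \<le> last_u \<longrightarrow>
              (lex_less (factor W i last_u) (factor W j last_u)
               \<longleftrightarrow> lex_less (factor W i n) (factor W j n))"
proof -
  have cW: "concat Ls = W" and lyn: "\<forall>L\<in>set Ls. lyndon L"
    and srt: "sorted_wrt (\<lambda>x y. y = x \<or> lex_less y x) Ls"
    using assms(2) unfolding lyndon_factorization_def by auto
  define U where "U = concat (take s Ls)"
  define Q where "Q = concat (drop s Ls)"
  have WUQ: "W = U @ Q" unfolding U_def Q_def using cW by (metis append_take_drop_id concat_append)
  have K: "\<And>d. d < length U \<Longrightarrow> lexl Q (drop d U @ Q)"
    using key[OF lyn srt assms(5)] unfolding U_def Q_def by blast
  have fac1: "\<And>i. 1 \<le> i \<Longrightarrow> i \<le> length U \<Longrightarrow> factor W i (length U) = drop (i - 1) U"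
    unfolding factor_def WUQ by simp
  have fac2: "\<And>i. 1 \<le> i \<Longrightarrow> i \<le> length U \<Longrightarrow> factor W i (length W) = drop (i - 1) U @ Q"
    unfolding factor_def WUQ by simp
  show ?thesis unfolding Let_def U_def[symmetric]
  proof (intro allI impI)
    fix i j
    assume ij: "length (concat (take (r - 1) Ls)) + 1 \<le> i \<and> i < j \<and> j \<le> length U"
    then have i1: "1 \<le> i" "i \<le> length U" and j1: "1 \<le> j" "j \<le> length U" and ilj: "i < j" by auto
    define x where "x = drop (i - 1) U"
    define y where "y = drop (j - 1) U"
    have len: "length y < length x" using x_def y_def i1 j1 ilj by simp
    have Kx: "\<And>c vs. x = y @ c # vs \<Longrightarrow> lexl Q (c # vs @ Q)"
    proof -
      fix c vs assume xc: "x = y @ c # vs"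
      have "drop (length y) x = c # vs" using xc by simp
      then have e: "drop (length y + (i - 1)) U = c # vs" using x_def by (simp add: add.commute)
      have "length y + (i - 1) < length U" using len x_def i1 by simp
      then have "lexl Q (drop (length y + (i - 1)) U @ Q)" by (rule K)
      then show "lexl Q (c # vs @ Q)" using e by simp
    qed
    have "lexl x y \<longleftrightarrow> lexl (x @ Q) (y @ Q)" using compat[OF len Kx] .
    then show "lex_less (factor W i (length U)) (factor W j (length U))
               \<longleftrightarrow> lex_less (factor W i (length W)) (factor W j (length W))"
      unfolding lex_less_iff fac1[OF i1] fac1[OF j1] fac2[OF i1] fac2[OF j1] x_def y_def .
  qed
qed

end
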